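(* The set $\mathcal{M}^+(X)$ of fully-supported Borel probability measures on $X=A^{\mathbb{N}}$, where $A$ is a finite alphabet with at least two symbols, is non-separable with respect to the projective distance \[ \rho(\mu,\nu)=\sup_{n\in\mathbb{N}}\max_{\pmb{a}\in A^n}\frac{1}{n}\left|\log\frac{\mu[\pmb{a}]}{\nu[\pmb{a}]}\right|. \]
   Context: $X=A^{\mathbb{N}}$ carries the product topology and its Borel $\sigma$-algebra. For $\pmb{a}=a_1\cdots a_n\in A^n$, $[\pmb{a}]=\{\pmb{x}\in X:\ x_1\cdots x_n=\pmb{a}\}$. $\mathcal{M}^+(X)$ is the set of Borel probability measures $\mu$ on $X$ with $\mu[\pmb{a}]>0$ for all finite words $\pmb{a}$. *)

theory Defs
  imports "HOL-Probability.Probability"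
begin

text \<open>The alphabet A is a finite type 'a; X = A^N is nat => 'a with the product
  sigma-algebra of discrete factors (which is the Borel sigma-algebra of the
  product topology on A^N).\<close>

definition Xsp :: "(nat \<Rightarrow> 'a) measure" where
  "Xsp = (\<Pi>\<^sub>M i\<in>(UNIV::nat set). count_space (UNIV::'a set))"

text \<open>Cylinder set of a finite word w = a_1 ... a_n (coordinates indexed from 0).\<close>
definition cyl :: "'a list \<Rightarrow> (nat \<Rightarrow> 'a) set" where
  "cyl w = {x \<in> space Xsp. \<forall>i<length w. x i = w ! i}"

definition Mplus :: "(nat \<Rightarrow> 'a) measure set" where
  "Mplus = {M. prob_space M \<and> sets M = sets Xsp \<and> (\<forall>w. measure M (cyl w) > 0)}"

text \<open>Projective distance (extended-real valued, since it may be infinite).\<close>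
definition rho :: "(nat \<Rightarrow> 'a::finite) measure \<Rightarrow> (nat \<Rightarrow> 'a) measure \<Rightarrow> ereal" where
  "rho \<mu> \<nu> = (SUP n\<in>{1..}. Max ((\<lambda>w. ereal ((1 / real n) *
       \<bar>ln (measure \<mu> (cyl w) / measure \<nu> (cyl w))\<bar>)) ` {w. length w = n}))"

end

theory Submission
  imports Defs
begin


lemma space_Xsp: "space Xsp = UNIV"
  by (auto simp: Xsp_def space_PiM)

lemma PiM_pmf_facts:
  fixes p :: "nat \<Rightarrow> 'a pmf"
  defines "M \<equiv> PiM UNIV (\<lambda>i. measure_pmf (p i))"
  shows "prob_space M" "sets M = sets Xsp"
    "measure M (cyl w) = (\<Prod>i<length w. pmf (p i) (w!i))"
proof -
  interpret product_prob_space "\<lambda>i. measure_pmf (p i)" UNIV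
    by (intro product_prob_spaceI) (simp add: prob_space_measure_pmf)
  show "prob_space M" unfolding M_def by unfold_locales
  show "sets M = sets Xsp" unfolding M_def Xsp_def
    by (rule sets_PiM_cong) simp_all
  have c: "cyl w = prod_emb UNIV (\<lambda>i. measure_pmf (p i)) {..<length w} (PiE {..<length w} (\<lambda>i. {w!i}))"
  proof (rule set_eqI)
    fix x :: "nat \<Rightarrow> 'a"
    show "x \<in> cyl w \<longleftrightarrow> x \<in> prod_emb UNIV (\<lambda>i. measure_pmf (p i)) {..<length w} (PiE {..<length w} (\<lambda>i. {w!i}))"
      unfolding prod_emb_iff restrict_PiE_iff cyl_def space_Xsp by auto
  qed
  have "emeasure M (cyl w) = (\<Prod>i<length w. emeasure (measure_pmf (p i)) {w!i})"
    unfolding c M_def by (rule emeasure_PiM_emb) auto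
  also have "\<dots> = ennreal (\<Prod>i<length w. pmf (p i) (w!i))"
    by (simp add: emeasure_pmf_single prod_ennreal)
  finally show "measure M (cyl w) = (\<Prod>i<length w. pmf (p i) (w!i))"
    by (simp add: measure_def prod_nonneg)
qed


lemma rho_lower:
  fixes \<mu> \<nu> :: "(nat \<Rightarrow> 'a::finite) measure"
  assumes "length w = n" "n \<ge> 1"
  shows "ereal ((1 / real n) * \<bar>ln (measure \<mu> (cyl w) / measure \<nu> (cyl w))\<bar>) \<le> rho \<mu> \<nu>"
proof -
  have fin: "finite {w::'a list. length w = n}"
    using finite_lists_length_eq[of "UNIV::'a set" n] by simp
  have "ereal ((1 / real n) * \<bar>ln (measure \<mu> (cyl w) / measure \<nu> (cyl w))\<bar>)
     \<le> Max ((\<lambda>w. ereal ((1 / real n) *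
       \<bar>ln (measure \<mu> (cyl w) / measure \<nu> (cyl w))\<bar>)) ` {w. length w = n})"
    by (rule Max_ge) (use fin assms in auto)
  also have "\<dots> \<le> rho \<mu> \<nu>" unfolding rho_def
    by (rule SUP_upper[where f = "\<lambda>n. Max ((\<lambda>w. ereal ((1 / real n) *
       \<bar>ln (measure \<mu> (cyl w) / measure \<nu> (cyl w))\<bar>)) ` {w. length w = n})"]) (use assms in auto)
  finally show ?thesis .
qed

lemma block_unique:
  fixes i j k :: nat
  assumes "2^j \<le> i" "i < 2^Suc j" "2^k \<le> i" "i < 2^Suc k"
  shows "k = j"
proof (rule ccontr)
  assume "k \<noteq> j"
  then consider "k < j" | "j < k" by linarith
  then show False
  proof cases
    case 1
    then have "(2::nat)^Suc k \<le> 2^j" by (intro power_increasing) auto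
    then show False using assms by linarith
  next
    case 2
    then have "(2::nat)^Suc j \<le> 2^k" by (intro power_increasing) auto
    then show False using assms by linarith
  qed
qed

lemma prod_block_bound:
  fixes f :: "nat \<Rightarrow> real" and j :: nat
  assumes ge1: "\<And>i. f i \<ge> 1" and blk: "\<And>i. 2^j \<le> i \<Longrightarrow> i < 2^Suc j \<Longrightarrow> f i \<ge> r" and r: "r \<ge> 1"
  shows "(\<Prod>i<2^Suc j. f i) \<ge> r ^ (2^j)"
proof -
  define m :: nat where "m = 2^j"
  have m2: "(2::nat)^Suc j = m + m" unfolding m_def by simp
  have split: "(\<Prod>i<m+m. f i) = (\<Prod>i<m. f i) * (\<Prod>i\<in>{m..<m+m}. f i)"
  proof -
    have "(\<Prod>i\<in>{0..<m}. f i) * (\<Prod>i\<in>{m..<m+m}. f i) = (\<Prod>i\<in>{0..<m+m}. f i)"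
      by (rule prod.atLeastLessThan_concat) auto
    then show ?thesis by (simp only: atLeast0LessThan)
  qed
  have a: "(\<Prod>i<m. f i) \<ge> 1" using ge1 by (intro prod_ge_1) auto
  have "(\<Prod>i\<in>{m..<m+m}. r) \<le> (\<Prod>i\<in>{m..<m+m}. f i)"
  proof (rule prod_mono)
    fix i assume "i \<in> {m..<m+m}"
    then have "2^j \<le> i" "i < 2^Suc j" using m2 unfolding m_def by auto
    then show "0 \<le> r \<and> r \<le> f i" using r blk by auto
  qed
  moreover have "(\<Prod>i\<in>{m..<m+m}. r) = r ^ m" by simp
  ultimately have b: "(\<Prod>i\<in>{m..<m+m}. f i) \<ge> r ^ m" by simp
  have "r ^ m \<ge> 0" using r by simp
  then have B0: "(\<Prod>i\<in>{m..<m+m}. f i) \<ge> 0" using b by linarith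
  have "(\<Prod>i<m. f i) * (\<Prod>i\<in>{m..<m+m}. f i) \<ge> 1 * (\<Prod>i\<in>{m..<m+m}. f i)"
    by (rule mult_right_mono[OF a B0])
  then have "(\<Prod>i<m+m. f i) \<ge> r ^ m" unfolding split using b by linarith
  then show ?thesis unfolding m2 m_def .
qed



lemma s: fixes a0 :: "'a::finite" shows "(\<Sum>x\<in>UNIV. (if x = a0 then 2 else 1::real)) = real CARD('a) + 1"
  proof -
    have "(\<Sum>x\<in>UNIV. (if x = a0 then 2 else 1::real)) = (\<Sum>x\<in>UNIV. 1 + (if x = a0 then 1 else 0))"
      by (intro sum.cong) auto
    also have "\<dots> = real CARD('a) + 1" by (simp add: sum.distrib)
    finally show ?thesis .
  qed

definition qT :: "'a::finite \<Rightarrow> 'a pmf" where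
  "qT a0 = embed_pmf (\<lambda>x. (if x = a0 then 2 else 1) / (real CARD('a) + 1))"

lemma pmf_qT:
  fixes a0 :: "'a::finite"
  shows "pmf (qT a0) x = (if x = a0 then 2 else 1) / (real CARD('a) + 1)"
proof -
  define f where "f = (\<lambda>x::'a. (if x = a0 then 2 else 1) / (real CARD('a) + 1))"
  have "(\<integral>\<^sup>+ x. ennreal (f x) \<partial>count_space UNIV) = (\<Sum>x\<in>UNIV. ennreal (f x))"
    by (rule nn_integral_count_space_finite) simp
  also have "\<dots> = ennreal (\<Sum>x\<in>UNIV. f x)"
    by (rule sum_ennreal) (simp add: f_def)
  also have "(\<Sum>x\<in>UNIV. f x) = 1"
    unfolding f_def by (simp only: sum_divide_distrib[symmetric] s) simp
  finally have "(\<integral>\<^sup>+ x. ennreal (f x) \<partial>count_space UNIV) = 1" by simp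
  moreover have "\<And>x. f x \<ge> 0" by (simp add: f_def)
  ultimately have "pmf (embed_pmf f) x = f x" by (intro pmf_embed_pmf) auto
  then show ?thesis unfolding qT_def f_def .
qed

lemma pmf_qF: "pmf (pmf_of_set (UNIV::'a::finite set)) x = 1 / real CARD('a)"
  by (simp add: pmf_of_set)

lemma uncountable_nat_sets: "\<not> countable (UNIV :: nat set set)"
proof
  assume "countable (UNIV :: nat set set)"
  then obtain h :: "nat set \<Rightarrow> nat" where h: "inj_on h UNIV" by (rule countableE)
  define f where "f = inv h"
  have fh: "f (h A) = A" for A unfolding f_def using h by (rule inv_f_f)
  define n where "n = h {m. m \<notin> f m}"
  have eq: "{m. m \<notin> f m} = f n" unfolding n_def fh ..
  have "n \<in> f n \<longleftrightarrow> n \<in> {m. m \<notin> f m}" by (simp only: eq)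
  then show False by simp
qed

definition blkbit :: "nat set \<Rightarrow> nat \<Rightarrow> bool" where
  "blkbit S i = (\<exists>j\<in>S. 2^j \<le> i \<and> i < 2^Suc j)"

lemma blkbit_block:
  assumes h: "2^j \<le> i" "i < 2^Suc j"
  shows "blkbit S i = (j \<in> S)"
proof
  assume "blkbit S i"
  then obtain k where k: "k \<in> S" "2^k \<le> i" "i < 2^Suc k" unfolding blkbit_def by blast
  have "k = j" by (rule block_unique[OF h k(2) k(3)])
  then show "j \<in> S" using k(1) by simp
next
  assume "j \<in> S"
  then show "blkbit S i" unfolding blkbit_def using h by blast
qed

definition pS :: "'a::finite \<Rightarrow> nat set \<Rightarrow> nat \<Rightarrow> 'a pmf" where
  "pS a0 S i = (if blkbit S i then qT a0 else pmf_of_set UNIV)"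

definition muS :: "'a::finite \<Rightarrow> nat set \<Rightarrow> (nat \<Rightarrow> 'a) measure" where
  "muS a0 S = PiM UNIV (\<lambda>i. measure_pmf (pS a0 S i))"

lemma pS_pos: "pmf (pS a0 S i) x > 0"
  by (simp add: pS_def pmf_qT pmf_qF)

lemma muS_cyl: "measure (muS a0 S) (cyl w) = (\<Prod>i<length w. pmf (pS a0 S i) (w!i))"
  unfolding muS_def by (rule PiM_pmf_facts)

lemma muS_Mplus: "muS a0 S \<in> Mplus"
  unfolding Mplus_def
proof (intro CollectI conjI allI)
  show "prob_space (muS a0 S)" unfolding muS_def by (rule PiM_pmf_facts)
  show "sets (muS a0 S) = sets Xsp" unfolding muS_def by (rule PiM_pmf_facts)
  fix w :: "'a list"
  show "measure (muS a0 S) (cyl w) > 0" unfolding muS_cyl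
    by (intro prod_pos) (simp add: pS_pos)
qed

lemma pmf_pS:
  fixes a0 :: "'a::finite"
  shows "pmf (pS a0 S i) x = (if blkbit S i then (if x = a0 then 2 else 1) / (real CARD('a) + 1)
     else 1 / real CARD('a))"
  by (simp add: pS_def pmf_qT pmf_qF)

lemma factor_bound:
  fixes a0 a1 :: "'a::finite" and S S' :: "nat set" and i :: nat
  assumes "a0 \<noteq> a1" "CARD('a) \<ge> 2"
  defines "N \<equiv> real CARD('a)"
  defines "c \<equiv> (if blkbit S i then a0 else a1)"
  defines "f \<equiv> pmf (pS a0 S i) c / pmf (pS a0 S' i) c"
  shows "f \<ge> 1" "blkbit S i \<noteq> blkbit S' i \<Longrightarrow> f \<ge> min (2*N/(N+1)) ((N+1)/N)"
proof -
  have N: "N \<ge> 2" using assms(2) unfolding N_def by simp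
  have e1: "(2 / (N+1)) / (1/N) = 2*N/(N+1)" using N by (simp add: field_simps)
  have e2: "(1/N) / (1 / (N+1)) = (N+1)/N" using N by (simp add: field_simps)
  have g1: "2*N/(N+1) \<ge> 1" using N by (simp add: field_simps)
  have g2: "(N+1)/N \<ge> 1" using N by (simp add: field_simps)
  have pos: "pmf (pS a0 S' i) c > 0" by (rule pS_pos)
  have ff: "if blkbit S i = blkbit S' i then f = 1 else (f = 2*N/(N+1) \<or> f = (N+1)/N)"
  proof (cases "blkbit S i")
    case T: True
    show ?thesis
    proof (cases "blkbit S' i")
      case True
      then have "pmf (pS a0 S i) c = pmf (pS a0 S' i) c" using T by (simp add: pmf_pS)
      then show ?thesis unfolding f_def using pos T True by simp
    next
      case False
      then have "f = (2 / (N+1)) / (1/N)" using T unfolding f_def c_def N_def by (simp add: pmf_pS)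
      then show ?thesis using e1 T False by simp
    qed
  next
    case F: False
    show ?thesis
    proof (cases "blkbit S' i")
      case True
      then have "f = (1/N) / (1 / (N+1))" using F assms(1) unfolding f_def c_def N_def
        by (simp add: pmf_pS)
      then show ?thesis using e2 F True by simp
    next
      case False
      then have "pmf (pS a0 S i) c = pmf (pS a0 S' i) c" using F by (simp add: pmf_pS)
      then show ?thesis unfolding f_def using pos F False by simp
    qed
  qed
  show "f \<ge> 1" using ff g1 g2 by (auto split: if_splits)
  show "blkbit S i \<noteq> blkbit S' i \<Longrightarrow> f \<ge> min (2*N/(N+1)) ((N+1)/N)"
    using ff by (auto split: if_splits)
qed

lemma key:
  fixes a0 a1 :: "'a::finite" and S S' :: "nat set" and j :: nat
  assumes "a0 \<noteq> a1" "CARD('a) \<ge> 2" "(j \<in> S) \<noteq> (j \<in> S')"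
  defines "N \<equiv> real CARD('a)"
  defines "r0 \<equiv> min (2*N/(N+1)) ((N+1)/N)"
  defines "w \<equiv> map (\<lambda>i. if blkbit S i then a0 else a1) [0..<2^Suc j]"
  shows "ln (measure (muS a0 S) (cyl w) / measure (muS a0 S') (cyl w)) \<ge> 2^j * ln r0"
proof -
  define f where "f i = pmf (pS a0 S i) (if blkbit S i then a0 else a1) /
      pmf (pS a0 S' i) (if blkbit S i then a0 else a1)" for i
  have N: "N \<ge> 2" using assms(2) unfolding N_def by simp
  have r0: "r0 > 1" unfolding r0_def using N by (simp add: field_simps)
  define cc where "cc i = (if blkbit S i then a0 else a1)" for i
  have len: "length w = 2^Suc j" unfolding w_def by simp
  have wi: "w ! i = cc i" if "i \<in> {..<2^Suc j}" for i
    using that unfolding w_def cc_def by simp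
  have m1: "measure (muS a0 S) (cyl w) = (\<Prod>i<2^Suc j. pmf (pS a0 S i) (cc i))"
    unfolding muS_cyl len by (rule prod.cong) (simp_all add: wi)
  have m2: "measure (muS a0 S') (cyl w) = (\<Prod>i<2^Suc j. pmf (pS a0 S' i) (cc i))"
    unfolding muS_cyl len by (rule prod.cong) (simp_all add: wi)
  have ratio: "measure (muS a0 S) (cyl w) / measure (muS a0 S') (cyl w) = (\<Prod>i<2^Suc j. f i)"
    unfolding m1 m2 f_def cc_def by (rule prod_dividef[symmetric])
  have "(\<Prod>i<2^Suc j. f i) \<ge> r0 ^ (2^j)"
  proof (rule prod_block_bound)
    show "1 \<le> f i" for i unfolding f_def by (rule factor_bound(1)[OF assms(1,2)])
    show "r0 \<le> f i" if "2^j \<le> i" "i < 2^Suc j" for i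
      unfolding f_def r0_def N_def
      by (rule factor_bound(2)[OF assms(1,2)]) (use that assms(3) blkbit_block in auto)
    show "1 \<le> r0" using r0 by simp
  qed
  moreover have pp: "r0 ^ (2^j) > 0" using r0 by simp
  ultimately have "(\<Prod>i<2^Suc j. f i) > 0" by linarith
  then have "ln (r0 ^ (2^j)) \<le> ln (\<Prod>i<2^Suc j. f i)"
    using pp \<open>(\<Prod>i<2^Suc j. f i) \<ge> r0 ^ (2^j)\<close> by (subst ln_le_cancel_iff) auto
  then show ?thesis unfolding ratio using r0 by (simp add: ln_realpow)
qed

lemma abs_contra:
  fixes a b c X Y :: real
  assumes "\<bar>a - c\<bar> < X" "\<bar>b - c\<bar> < X" "Y \<le> a - b" "X = Y / 2"
  shows False
proof -
  have "a - c < X" using assms(1) by linarith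
  moreover have "c - b < X" using assms(2) by linarith
  ultimately show False using assms(3,4) by linarith
qed

theorem theorem2p2:
  assumes "CARD('a::finite) \<ge> 2"
  shows "\<not> (\<exists>D \<subseteq> (Mplus :: (nat \<Rightarrow> 'a) measure set). countable D \<and>
            (\<forall>\<mu>\<in>Mplus. \<forall>\<epsilon>>0. \<exists>\<nu>\<in>D. rho \<mu> \<nu> < ereal \<epsilon>))"
proof
  assume "\<exists>D \<subseteq> (Mplus :: (nat \<Rightarrow> 'a) measure set). countable D \<and>
            (\<forall>\<mu>\<in>Mplus. \<forall>\<epsilon>>0. \<exists>\<nu>\<in>D. rho \<mu> \<nu> < ereal \<epsilon>)"
  then obtain D :: "(nat \<Rightarrow> 'a) measure set" where D: "D \<subseteq> Mplus" "countable D"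
    and cov: "\<forall>\<mu>\<in>Mplus. \<forall>\<epsilon>>0. \<exists>\<nu>\<in>D. rho \<mu> \<nu> < ereal \<epsilon>" by blast
  have "\<not> card (UNIV::'a set) \<le> 1" using assms by simp
  then obtain a0 a1 :: 'a where a: "a0 \<noteq> a1"
    using card_le_Suc0_iff_eq[of "UNIV::'a set"] by auto
  define N where "N = real CARD('a)"
  define r0 where "r0 = min (2*N/(N+1)) ((N+1)/N)"
  have N: "N \<ge> 2" using assms unfolding N_def by simp
  have r0: "r0 > 1" unfolding r0_def using N by (simp add: field_simps)
  define \<epsilon> where "\<epsilon> = ln r0 / 4"
  have \<epsilon>: "\<epsilon> > 0" unfolding \<epsilon>_def using r0 by simp
  have "\<forall>S. \<exists>\<nu>. \<nu> \<in> D \<and> rho (muS a0 S) \<nu> < ereal \<epsilon>"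
    using cov muS_Mplus \<epsilon> by blast
  then obtain g where g': "\<forall>S. g S \<in> D \<and> rho (muS a0 S) (g S) < ereal \<epsilon>"
    by (auto dest!: choice)
  then have g: "\<And>S. g S \<in> D" "\<And>S. rho (muS a0 S) (g S) < ereal \<epsilon>" by auto
  have "\<not> inj g"
  proof
    assume "inj g"
    moreover have "countable (range g)" using g(1) D(2) by (meson countable_subset image_subsetI)
    ultimately have "countable (UNIV :: nat set set)" using countable_image_inj_on[of g UNIV] by blast
    then show False using uncountable_nat_sets by simp
  qed
  then obtain S S' where SS: "S \<noteq> S'" "g S = g S'" unfolding inj_def by blast
  then obtain j where j: "(j \<in> S) \<noteq> (j \<in> S')" unfolding set_eq_iff by blast
  define \<nu> where "\<nu> = g S"
  have \<nu>: "\<nu> \<in> Mplus" using g(1) D(1) unfolding \<nu>_def by blast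
  define n :: nat where "n = 2^Suc j"
  define w where "w = map (\<lambda>i. if blkbit S i then a0 else a1) [0..<n]"
  have lw: "length w = n" "n \<ge> 1" unfolding w_def n_def by auto
  have kk: "ln (measure (muS a0 S) (cyl w) / measure (muS a0 S') (cyl w)) \<ge> 2^j * ln r0"
    unfolding w_def n_def r0_def N_def by (rule key[OF a assms j])
  have close: "\<bar>ln (measure (muS a0 T) (cyl w) / measure \<nu> (cyl w))\<bar> < real n * \<epsilon>"
    if "g T = \<nu>" for T
  proof -
    have "ereal ((1 / real n) * \<bar>ln (measure (muS a0 T) (cyl w) / measure \<nu> (cyl w))\<bar>) < ereal \<epsilon>"
    proof -
      have "rho (muS a0 T) \<nu> < ereal \<epsilon>" using g(2)[of T] that by simp
      then show ?thesis using rho_lower[OF lw, of "muS a0 T" \<nu>] by (rule le_less_trans[rotated])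
    qed
    then have "(1 / real n) * \<bar>ln (measure (muS a0 T) (cyl w) / measure \<nu> (cyl w))\<bar> < \<epsilon>"
      by simp
    then show ?thesis using lw by (simp add: field_simps)
  qed
  have p1: "measure (muS a0 S) (cyl w) > 0" "measure (muS a0 S') (cyl w) > 0"
    "measure \<nu> (cyl w) > 0"
    using muS_Mplus[of a0 S] muS_Mplus[of a0 S'] \<nu> unfolding Mplus_def by auto
  have A: "\<bar>ln (measure (muS a0 S) (cyl w)) - ln (measure \<nu> (cyl w))\<bar> < real n * \<epsilon>"
    using close[of S] p1 \<nu>_def by (simp add: ln_div)
  have B: "\<bar>ln (measure (muS a0 S') (cyl w)) - ln (measure \<nu> (cyl w))\<bar> < real n * \<epsilon>"
    using close[of S'] p1 \<nu>_def SS(2) by (simp add: ln_div)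
  have C: "ln (measure (muS a0 S) (cyl w)) - ln (measure (muS a0 S') (cyl w)) \<ge> 2^j * ln r0"
    using kk p1 by (simp add: ln_div)
  have E: "real n * \<epsilon> = 2^j * ln r0 / 2" unfolding n_def \<epsilon>_def by simp
  show False using abs_contra[OF A B C E] .
qed

end
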